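(* Let $P\in\Delta_{\mathcal{T},\mathcal{X},\mathcal{Y}}$ and let $Q_1,Q_2\in\Delta_P$ both be maximizers of $H_Q(T\mid X,Y)$ over $Q\in\Delta_P$. Then $Q_1(T\mid X,Y)=Q_2(T\mid X,Y)$.
   Context: $T,X,Y$ are random variables with finite state spaces $\mathcal{T},\mathcal{X},\mathcal{Y}$; $\Delta_{\mathcal{T},\mathcal{X},\mathcal{Y}}$ is the set of all joint distributions on $\mathcal{T}\times\mathcal{X}\times\mathcal{Y}$. For $P\in\Delta_{\mathcal{T},\mathcal{X},\mathcal{Y}}$, $\Delta_P=\{Q\in\Delta_{\mathcal{T},\mathcal{X},\mathcal{Y}}: Q(X=x,T=t)=P(X=x,T=t),\ Q(Y=y,T=t)=P(Y=y,T=t)\ \forall x,y,t\}$. $H_Q(T\mid X,Y)$ is the conditional entropy under $Q$; equality of conditionals is understood almost everywhere. *)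

theory Defs
  imports "HOL-Analysis.Analysis"
begin

definition is_dist :: "('t::finite \<times> 'x::finite \<times> 'y::finite \<Rightarrow> real) \<Rightarrow> bool" where
  "is_dist Q \<longleftrightarrow> (\<forall>z. 0 \<le> Q z) \<and> (\<Sum>z\<in>UNIV. Q z) = 1"

definition marg_XT :: "('t::finite \<times> 'x::finite \<times> 'y::finite \<Rightarrow> real) \<Rightarrow> 'x \<Rightarrow> 't \<Rightarrow> real" where
  "marg_XT Q x t = (\<Sum>y\<in>UNIV. Q (t, x, y))"

definition marg_YT :: "('t::finite \<times> 'x::finite \<times> 'y::finite \<Rightarrow> real) \<Rightarrow> 'y \<Rightarrow> 't \<Rightarrow> real" where
  "marg_YT Q y t = (\<Sum>x\<in>UNIV. Q (t, x, y))"

definition marg_XY :: "('t::finite \<times> 'x::finite \<times> 'y::finite \<Rightarrow> real) \<Rightarrow> 'x \<Rightarrow> 'y \<Rightarrow> real" where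
  "marg_XY Q x y = (\<Sum>t\<in>UNIV. Q (t, x, y))"

definition Delta_P :: "('t::finite \<times> 'x::finite \<times> 'y::finite \<Rightarrow> real) \<Rightarrow> ('t \<times> 'x \<times> 'y \<Rightarrow> real) set" where
  "Delta_P P = {Q. is_dist Q \<and> (\<forall>x t. marg_XT Q x t = marg_XT P x t) \<and> (\<forall>y t. marg_YT Q y t = marg_YT P y t)}"

definition cond_T_XY :: "('t::finite \<times> 'x::finite \<times> 'y::finite \<Rightarrow> real) \<Rightarrow> 't \<Rightarrow> 'x \<Rightarrow> 'y \<Rightarrow> real" where
  "cond_T_XY Q t x y = Q (t, x, y) / marg_XY Q x y"

definition cond_entropy_T_XY :: "('t::finite \<times> 'x::finite \<times> 'y::finite \<Rightarrow> real) \<Rightarrow> real" where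
  "cond_entropy_T_XY Q = - (\<Sum>(t, x, y)\<in>UNIV.
      (if Q (t, x, y) = 0 then 0 else Q (t, x, y) * ln (cond_T_XY Q t x y)))"

end

theory Submission imports Defs begin

lemma ln_strict: "0 < (x::real) \<Longrightarrow> x \<noteq> 1 \<Longrightarrow> ln x < x - 1"
  using ln_eq_minus_one ln_le_minus_one by force

definition G :: "real \<Rightarrow> real \<Rightarrow> real" where
  "G a A = (if a = 0 then 0 else a * ln (a / A))"

lemma aux:
  fixes a A u U :: real
  assumes "0 < a" "0 < A" "0 < u" "0 < U"
  shows "a * ln (a / A) - a * ln (u / U) \<ge> a - A * u / U"
    and "a * U \<noteq> A * u \<Longrightarrow> a * ln (a / A) - a * ln (u / U) > a - A * u / U"
proof -
  have e: "a * ln (a / A) - a * ln (u / U) = - a * ln ((A*u)/(a*U))"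
  proof -
    have p1: "A*u > 0" "a*U > 0" using assms by (simp_all add: mult_pos_pos)
    have "ln ((A*u)/(a*U)) = ln (A*u) - ln (a*U)" using p1 assms by (simp add: ln_div)
    also have "\<dots> = ln A + ln u - ln a - ln U" using assms by (simp add: ln_mult)
    finally have h1: "ln ((A*u)/(a*U)) = ln A + ln u - ln a - ln U" .
    have h2: "ln (a/A) = ln a - ln A" "ln (u/U) = ln u - ln U" using assms by (simp_all add: ln_div)
    show ?thesis by (simp only: h1 h2) (simp add: algebra_simps)
  qed
  have r: "a * ((A*u)/(a*U) - 1) = A * u / U - a" using assms by (simp add: field_simps)
  have p: "(A*u)/(a*U) > 0" using assms by simp
  show "a * ln (a / A) - a * ln (u / U) \<ge> a - A * u / U"
    using mult_left_mono[OF ln_le_minus_one[OF p], of a] assms e r by simp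
  assume "a * U \<noteq> A * u"
  hence "(A*u)/(a*U) \<noteq> 1" using assms by (simp add: field_simps)
  thus "a * ln (a / A) - a * ln (u / U) > a - A * u / U"
    using mult_strict_left_mono[OF ln_strict[OF p], of a] assms e r by simp
qed

lemma aux0:
  assumes "0 \<le> a" "a \<le> A" "0 < u" "0 < U"
  shows "G a A - a * ln (u / U) \<ge> a - A * u / U"
proof (cases "a = 0")
  case True thus ?thesis using assms by (simp add: G_def)
next
  case False thus ?thesis using assms aux(1)[of a A u U] by (simp add: G_def)
qed

lemma logsum:
  assumes "0 \<le> a" "a \<le> A" "0 \<le> b" "b \<le> B"
  shows "G (a+b) (A+B) \<le> G a A + G b B"
    and "0 < A \<Longrightarrow> 0 < B \<Longrightarrow> a / A \<noteq> b / B \<Longrightarrow> G (a+b) (A+B) < G a A + G b B"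
proof -
  have main: "G (a+b) (A+B) \<le> G a A + G b B \<and>
     (0 < A \<longrightarrow> 0 < B \<longrightarrow> a / A \<noteq> b / B \<longrightarrow> G (a+b) (A+B) < G a A + G b B)"
  proof (cases "a + b = 0")
    case True
    hence "a = 0" "b = 0" using assms by auto
    thus ?thesis by (simp add: G_def)
  next
    case False
    define u where "u = a + b"
    define U where "U = A + B"
    have u: "u > 0" using False assms u_def by auto
    have U: "U > 0" using u assms u_def U_def by auto
    have Gs: "G (a+b) (A+B) = u * ln (u / U)" using False u_def U_def by (simp add: G_def)
    have z: "(a - A * u / U) + (b - B * u / U) = 0" using U u_def U_def by (simp add: field_simps)
    have 1: "G a A - a * ln (u / U) \<ge> a - A * u / U" using aux0 assms u U by blast
    have 2: "G b B - b * ln (u / U) \<ge> b - B * u / U" using aux0 assms u U by blast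
    have sp: "u * ln (u / U) = a * ln (u / U) + b * ln (u / U)" using u_def by (simp add: algebra_simps)
    have w: "G (a+b) (A+B) \<le> G a A + G b B" using 1 2 z Gs sp by linarith
    have st: "G (a+b) (A+B) < G a A + G b B" if AB: "0 < A" "0 < B" "a / A \<noteq> b / B"
    proof (cases "a > 0")
      case True
      have ne: "a * U \<noteq> A * u"
      proof
        assume "a * U = A * u"
        hence "a * B = A * b" using u_def U_def by (simp add: algebra_simps)
        thus False using AB by (simp add: field_simps)
      qed
      have "G a A - a * ln (u / U) > a - A * u / U"
        using aux(2)[OF True AB(1) u U ne] True by (simp add: G_def)
      thus ?thesis using 2 z Gs sp by linarith
    next
      case False
      hence a0: "a = 0" using assms by auto
      hence bp: "b > 0" using u u_def by auto
      have ne: "b * U \<noteq> B * u"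
      proof
        assume "b * U = B * u"
        hence "b * A = 0" using u_def U_def a0 by (simp add: algebra_simps)
        thus False using AB bp by simp
      qed
      have "G b B - b * ln (u / U) > b - B * u / U"
        using aux(2)[OF bp AB(2) u U ne] bp by (simp add: G_def)
      thus ?thesis using 1 z Gs sp by linarith
    qed
    show ?thesis using w st by blast
  qed
  show "G (a+b) (A+B) \<le> G a A + G b B" using main by blast
  show "0 < A \<Longrightarrow> 0 < B \<Longrightarrow> a / A \<noteq> b / B \<Longrightarrow> G (a+b) (A+B) < G a A + G b B"
    using main by blast
qed

definition trm :: "('t::finite \<times> 'x::finite \<times> 'y::finite \<Rightarrow> real) \<Rightarrow> 't \<times> 'x \<times> 'y \<Rightarrow> real" where
  "trm Q z = (case z of (t, x, y) \<Rightarrow> G (Q (t, x, y)) (marg_XY Q x y))"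

lemma ent: "cond_entropy_T_XY Q = - (\<Sum>z\<in>UNIV. trm Q z)"
  unfolding cond_entropy_T_XY_def trm_def
  by (intro arg_cong[where f=uminus] sum.cong) (auto simp: G_def cond_T_XY_def)

lemma G_half: "G (c/2) (C/2) * 2 = G c C"
  by (simp add: G_def)

lemma le_marg: "is_dist Q \<Longrightarrow> Q (t, x, y) \<le> marg_XY Q x y"
  unfolding marg_XY_def is_dist_def
  by (rule member_le_sum[where f="\<lambda>t. Q (t, x, y)"]) auto

theorem mainTheorem7:
  fixes P Q1 Q2 :: "'t::finite \<times> 'x::finite \<times> 'y::finite \<Rightarrow> real"
  assumes "is_dist P"
    and "Q1 \<in> Delta_P P" and "Q2 \<in> Delta_P P"
    and "\<forall>Q\<in>Delta_P P. cond_entropy_T_XY Q \<le> cond_entropy_T_XY Q1"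
    and "\<forall>Q\<in>Delta_P P. cond_entropy_T_XY Q \<le> cond_entropy_T_XY Q2"
  shows "\<forall>t x y. marg_XY Q1 x y > 0 \<and> marg_XY Q2 x y > 0 \<longrightarrow>
           cond_T_XY Q1 t x y = cond_T_XY Q2 t x y"
proof (intro allI impI)
  fix t x y
  assume pos: "marg_XY Q1 x y > 0 \<and> marg_XY Q2 x y > 0"
  define M where "M = (\<lambda>z. (Q1 z + Q2 z) / 2)"
  have d1: "is_dist Q1" and d2: "is_dist Q2" using assms(2,3) by (auto simp: Delta_P_def)
  have mXY: "marg_XY M x y = (marg_XY Q1 x y + marg_XY Q2 x y) / 2" for x y
    unfolding M_def marg_XY_def by (simp add: sum.distrib sum_divide_distrib[symmetric])
  have "M \<in> Delta_P P"
  proof -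
    have "is_dist M" using d1 d2 unfolding is_dist_def M_def
      by (simp add: sum.distrib sum_divide_distrib[symmetric])
    moreover have "marg_XT M x t = marg_XT P x t" for x t
      using assms(2,3) unfolding M_def marg_XT_def Delta_P_def
      by (simp add: sum.distrib sum_divide_distrib[symmetric])
    moreover have "marg_YT M y t = marg_YT P y t" for y t
      using assms(2,3) unfolding M_def marg_YT_def Delta_P_def
      by (simp add: sum.distrib sum_divide_distrib[symmetric])
    ultimately show ?thesis unfolding Delta_P_def by blast
  qed
  hence hM: "cond_entropy_T_XY M \<le> cond_entropy_T_XY Q1" using assms(4) by blast
  have h12: "cond_entropy_T_XY Q1 = cond_entropy_T_XY Q2" using assms by fastforce
  define D where "D z = trm Q1 z + trm Q2 z - 2 * trm M z" for z
  have trmM: "2 * trm M (t, x, y) = G (Q1 (t,x,y) + Q2 (t,x,y)) (marg_XY Q1 x y + marg_XY Q2 x y)" for t x y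
    using G_half[of "Q1 (t,x,y) + Q2 (t,x,y)" "marg_XY Q1 x y + marg_XY Q2 x y"]
    unfolding trm_def mXY by (simp add: M_def mult.commute)
  have Dnn: "D z \<ge> 0" for z
  proof -
    obtain t x y where z: "z = (t, x, y)" by (cases z) auto
    have "G (Q1 (t,x,y) + Q2 (t,x,y)) (marg_XY Q1 x y + marg_XY Q2 x y)
          \<le> G (Q1 (t,x,y)) (marg_XY Q1 x y) + G (Q2 (t,x,y)) (marg_XY Q2 x y)"
      by (rule logsum(1)) (use d1 d2 le_marg in \<open>auto simp: is_dist_def\<close>)
    thus ?thesis unfolding D_def z trmM[symmetric] by (simp add: trm_def)
  qed
  have sD: "(\<Sum>z\<in>UNIV. D z) = 2 * cond_entropy_T_XY M - cond_entropy_T_XY Q1 - cond_entropy_T_XY Q2"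
    unfolding D_def ent by (simp add: sum.distrib sum_subtractf sum_distrib_left)
  have "(\<Sum>z\<in>UNIV. D z) = 0"
  proof -
    have "(\<Sum>z\<in>UNIV. D z) \<ge> 0" using Dnn by (simp add: sum_nonneg)
    thus ?thesis using sD hM h12 by linarith
  qed
  hence D0: "D (t, x, y) = 0" using Dnn sum_nonneg_eq_0_iff[of UNIV D] by simp
  show "cond_T_XY Q1 t x y = cond_T_XY Q2 t x y"
  proof (rule ccontr)
    assume ne: "cond_T_XY Q1 t x y \<noteq> cond_T_XY Q2 t x y"
    have "G (Q1 (t,x,y) + Q2 (t,x,y)) (marg_XY Q1 x y + marg_XY Q2 x y)
          < G (Q1 (t,x,y)) (marg_XY Q1 x y) + G (Q2 (t,x,y)) (marg_XY Q2 x y)"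
      by (rule logsum(2)) (use d1 d2 le_marg pos ne in \<open>auto simp: is_dist_def cond_T_XY_def\<close>)
    thus False using D0 unfolding D_def trmM[symmetric] by (simp add: trm_def)
  qed
qed

end
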